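(* Let $\mathbb{H}=\{z\in\mathbb{C}:\operatorname{Im}z>0\}$. For $z_1,z_2\in\mathbb{H}$ and $p\ge1$ let \[ T_p(z_1,z_2)=\frac{|z_1-z_2|}{|z_1-\overline{z_2}|\sqrt[p]{\alpha^p+(1-\alpha)^p}},\qquad \alpha=\frac{\operatorname{Im}(z_1)}{\operatorname{Im}(z_1)+\operatorname{Im}(z_2)}. \] Then \[ b_{\mathbb{H},p}(z_1,z_2)\ge T_p(z_1,z_2)\ge\frac{|z_1-z_2|}{|z_1-\overline{z_2}|}=s_{\mathbb{H}}(z_1,z_2). \] In particular $b_{\mathbb{H},1}(z_1,z_2)=T_1(z_1,z_2)=s_{\mathbb{H}}(z_1,z_2)$. For $p>1$, the equality $b_{\mathbb{H},p}(z_1,z_2)=T_p(z_1,z_2)$ holds if and only if $\operatorname{Re}(z_1)=\operatorname{Re}(z_2)$ or $\operatorname{Im}(z_1)=\operatorname{Im}(z_2)$.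
   Context: For $z_1,z_2\in\mathbb{H}$ and $p\ge1$, $b_{\mathbb{H},p}(z_1,z_2)=\sup_{t\in\mathbb{R}}\frac{|z_1-z_2|}{\sqrt[p]{|z_1-t|^p+|t-z_2|^p}}$, and $s_{\mathbb{H}}=b_{\mathbb{H},1}$. *)

theory Defs
  imports "HOL-Analysis.Analysis"
begin

definition upper_half_plane :: "complex set" where
  "upper_half_plane = {z. Im z > 0}"

definition bHp :: "real \<Rightarrow> complex \<Rightarrow> complex \<Rightarrow> real" where
  "bHp p z1 z2 = (SUP t::real. cmod (z1 - z2) /
      ((cmod (z1 - of_real t) powr p + cmod (of_real t - z2) powr p) powr (1 / p)))"

definition sH :: "complex \<Rightarrow> complex \<Rightarrow> real" where
  "sH z1 z2 = bHp 1 z1 z2"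

definition Tp :: "real \<Rightarrow> complex \<Rightarrow> complex \<Rightarrow> real" where
  "Tp p z1 z2 = (let \<alpha> = Im z1 / (Im z1 + Im z2) in
      cmod (z1 - z2) / (cmod (z1 - cnj z2) * (\<alpha> powr p + (1 - \<alpha>) powr p) powr (1 / p)))"

end

theory Submission imports Defs begin

lemma powr_inv_cancel: "0 \<le> x \<Longrightarrow> 0 < a \<Longrightarrow> (x powr a) powr (1/a) = (x::real)"
  by (simp add: powr_powr)

lemma powr_base_le_iff: "0 \<le> x \<Longrightarrow> 0 \<le> y \<Longrightarrow> 0 < a \<Longrightarrow> (x::real) powr a \<le> y powr a \<longleftrightarrow> x \<le> y"
proof
  assume h: "0 \<le> x" "0 \<le> y" "0 < a" "x powr a \<le> y powr a"
  have "(x powr a) powr (1/a) \<le> (y powr a) powr (1/a)"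
    by (rule powr_mono2) (use h in auto)
  thus "x \<le> y" using h powr_inv_cancel by simp
qed (simp add: powr_mono2)

lemma powr_base_eq_iff: "0 \<le> x \<Longrightarrow> 0 \<le> y \<Longrightarrow> 0 < a \<Longrightarrow> (x::real) powr a = y powr a \<longleftrightarrow> x = y"
  using powr_base_le_iff by (metis order.antisym order.refl)

lemma root_ge: "0 \<le> a \<Longrightarrow> 0 \<le> b \<Longrightarrow> 0 < p \<Longrightarrow> (a::real) \<le> (a powr p + b powr p) powr (1/p)"
proof -
  assume h: "0 \<le> a" "0 \<le> b" "0 < p"
  have "(a powr p) powr (1/p) \<le> (a powr p + b powr p) powr (1/p)"
    by (rule powr_mono2) (use h in auto)
  thus ?thesis using h powr_inv_cancel by simp
qed

lemma der: "0 < y \<Longrightarrow> ((\<lambda>t. ((x - t)^2 + y^2) powr (q::real)) has_real_derivative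
   ((x - t0)^2 + y^2) powr q * (2 * (t0 - x) * q / ((x - t0)^2 + y^2))) (at t0)"
proof -
  assume "0 < y"
  hence pos: "0 < (x - t0)^2 + y^2" by (simp add: add_nonneg_pos)
  have "((\<lambda>t. ((x - t)^2 + y^2) powr (\<lambda>_. q) t) has_real_derivative
     ((x - t0)^2 + y^2) powr q * (0 * ln ((x - t0)^2 + y^2) + (2 * (t0 - x)) * q / ((x - t0)^2 + y^2))) (at t0)"
    apply (rule DERIV_powr)
      apply (rule derivative_eq_intros refl)+
      apply (simp add: algebra_simps)
    using pos apply simp
    apply (rule derivative_eq_intros)
    apply simp
    done
  thus ?thesis by simp
qed

theorem theorem3p21:
  fixes z1 z2 :: complex and p :: real
  assumes "z1 \<in> upper_half_plane" and "z2 \<in> upper_half_plane" and "p \<ge> 1"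
  shows "bHp p z1 z2 \<ge> Tp p z1 z2
    \<and> Tp p z1 z2 \<ge> cmod (z1 - z2) / cmod (z1 - cnj z2)
    \<and> cmod (z1 - z2) / cmod (z1 - cnj z2) = sH z1 z2
    \<and> bHp 1 z1 z2 = Tp 1 z1 z2 \<and> Tp 1 z1 z2 = sH z1 z2
    \<and> (p > 1 \<longrightarrow> (bHp p z1 z2 = Tp p z1 z2 \<longleftrightarrow> Re z1 = Re z2 \<or> Im z1 = Im z2))"
proof -
  define x1 y1 x2 y2 where "x1 = Re z1" and "y1 = Im z1" and "x2 = Re z2" and "y2 = Im z2"
  have y1: "y1 > 0" and y2: "y2 > 0"
    using assms by (auto simp: upper_half_plane_def y1_def y2_def)
  define s where "s = y1 + y2"
  have s: "s > 0" using y1 y2 by (simp add: s_def)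
  define \<alpha> where "\<alpha> = y1 / s"
  have al: "0 < \<alpha>" "\<alpha> < 1" using y1 y2 s by (auto simp: \<alpha>_def s_def field_simps)
  define D where "D = cmod (z1 - cnj z2)"
  have Dpos: "D > 0"
  proof -
    have "\<bar>Im (z1 - cnj z2)\<bar> \<le> D" unfolding D_def by (rule abs_Im_le_cmod)
    moreover have "Im (z1 - cnj z2) = s" by (simp add: s_def y1_def y2_def)
    ultimately show ?thesis using s by simp
  qed
  define t0 where "t0 = (x1 * y2 + x2 * y1) / s"
  have e1: "z1 - of_real t0 = of_real \<alpha> * (z1 - cnj z2)"
    using s by (intro complex_eqI) (simp_all add: t0_def \<alpha>_def s_def x1_def y1_def x2_def y2_def field_simps)
  have e2: "of_real t0 - z2 = of_real (1 - \<alpha>) * cnj (z1 - cnj z2)"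
    using s by (intro complex_eqI) (simp_all add: t0_def \<alpha>_def s_def x1_def y1_def x2_def y2_def field_simps)
  have a0: "cmod (z1 - of_real t0) = \<alpha> * D" using e1 al by (simp add: norm_mult D_def)
  have b0: "cmod (of_real t0 - z2) = (1 - \<alpha>) * D"
  proof -
    have "cmod (of_real t0 - z2) = norm (of_real (1 - \<alpha>) :: complex) * cmod (cnj (z1 - cnj z2))"
      by (simp only: e2 norm_mult)
    also have "\<dots> = (1 - \<alpha>) * D" using al unfolding complex_mod_cnj D_def norm_of_real by simp
    finally show ?thesis .
  qed
  have apos: "y1 \<le> cmod (z1 - of_real t)" for t
    using abs_Im_le_cmod [of "z1 - of_real t"] by (simp add: y1_def)
  have bpos: "y2 \<le> cmod (of_real t - z2)" for t
    using abs_Im_le_cmod [of "of_real t - z2"] by (simp add: y2_def)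
  have tri: "D \<le> cmod (z1 - of_real t) + cmod (of_real t - z2)" for t
  proof -
    have "cmod (of_real t - z2) = cmod (of_real t - cnj z2)"
      by (metis complex_mod_cnj complex_cnj_diff complex_cnj_complex_of_real)
    moreover have "D \<le> cmod (z1 - of_real t) + cmod (of_real t - cnj z2)"
      unfolding D_def using norm_triangle_ineq[of "z1 - of_real t" "of_real t - cnj z2"] by simp
    ultimately show ?thesis by simp
  qed
  define c where "c = cmod (z1 - z2)"
  define g where "g q t = c / ((cmod (z1 - of_real t) powr q + cmod (of_real t - z2) powr q) powr (1/q))" for q t
  have bH: "bHp q z1 z2 = Sup (range (g q))" for q by (simp add: bHp_def g_def c_def)
  have bdd: "bdd_above (range (g q))" if q: "q > 0" for q
  proof (rule bdd_aboveI2)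
    fix t
    have "y1 \<le> cmod (z1 - of_real t)" by (rule apos)
    also have "\<dots> \<le> (cmod (z1 - of_real t) powr q + cmod (of_real t - z2) powr q) powr (1/q)"
      by (rule root_ge) (use q in auto)
    finally have "y1 \<le> (cmod (z1 - of_real t) powr q + cmod (of_real t - z2) powr q) powr (1/q)" .
    then show "g q t \<le> c / y1" unfolding g_def by (intro frac_le) (use y1 in \<open>auto simp: c_def\<close>)
  qed
  define S where "S q = \<alpha> powr q + (1 - \<alpha>) powr q" for q
  have Spos: "S q > 0" for q using al by (simp add: S_def add_pos_pos)
  have Tform: "Tp q z1 z2 = c / (D * S q powr (1/q))" for q
    by (simp add: Tp_def c_def D_def S_def Let_def \<alpha>_def s_def y1_def y2_def)
  have Tg: "Tp q z1 z2 = g q t0" if q: "q > 0" for q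
  proof -
    have "(cmod (z1 - of_real t0) powr q + cmod (of_real t0 - z2) powr q) = D powr q * S q"
      unfolding a0 b0 S_def using al Dpos by (simp add: powr_mult distrib_left mult.commute)
    moreover have "(D powr q * S q) powr (1/q) = D * S q powr (1/q)"
      using powr_mult powr_inv_cancel Dpos Spos q by (simp add: powr_mult powr_inv_cancel less_imp_le)
    ultimately show ?thesis by (simp add: Tform g_def)
  qed
  have P1: "bHp p z1 z2 \<ge> Tp p z1 z2"
    unfolding bH using Tg[of p] assms(3) by (simp add: cSUP_upper bdd)
  have Sle: "S p \<le> 1"
  proof -
    have "\<alpha> powr p \<le> \<alpha> powr 1" by (rule powr_mono') (use al assms(3) in auto)
    moreover have "(1 - \<alpha>) powr p \<le> (1 - \<alpha>) powr 1" by (rule powr_mono') (use al assms(3) in auto)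
    ultimately show ?thesis using al by (simp add: S_def)
  qed
  have Sple: "S p powr (1/p) \<le> 1" using Sle Spos[of p] assms(3) by (intro powr_le1) auto
  have Sppos: "S p powr (1/p) > 0" using Spos[of p] by simp
  have P2: "Tp p z1 z2 \<ge> c / D"
    unfolding Tform
    by (rule frac_le) (use Dpos Sppos Sple in \<open>auto simp: c_def mult_left_le\<close>)
  have g1: "g 1 t = c / (cmod (z1 - of_real t) + cmod (of_real t - z2))" for t
    by (simp add: g_def)
  have sHv: "sH z1 z2 = c / D"
    unfolding sH_def bH
  proof (rule cSup_eq_maximum)
    show "c / D \<in> range (g 1)"
      using a0 b0 by (intro range_eqI[of _ _ t0]) (simp add: g1 algebra_simps)
    show "x \<le> c / D" if "x \<in> range (g 1)" for x
      using that tri Dpos by (auto simp: g1 c_def intro!: frac_le)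
  qed
  have T1: "Tp 1 z1 z2 = c / D" unfolding Tform using al by (simp add: S_def)
  have P5: "p > 1 \<longrightarrow> (bHp p z1 z2 = Tp p z1 z2 \<longleftrightarrow> Re z1 = Re z2 \<or> Im z1 = Im z2)"
  proof
    assume p1: "p > 1"
    define f where "f t = cmod (z1 - of_real t) powr p + cmod (of_real t - z2) powr p" for t
    have fpos: "f t > 0" for t
    proof -
      have "cmod (z1 - of_real t) > 0" using apos[of t] y1 by linarith
      then have "cmod (z1 - of_real t) powr p > 0" by simp
      then show ?thesis unfolding f_def by (simp add: add_pos_nonneg)
    qed
    have gf: "g p t = c / f t powr (1/p)" for t by (simp add: g_def f_def)
    have key2: "(\<forall>t. f t0 \<le> f t) \<longleftrightarrow> x1 = x2 \<or> y1 = y2"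
    proof
      assume "x1 = x2 \<or> y1 = y2"
      then show "\<forall>t. f t0 \<le> f t"
      proof
        assume x: "x1 = x2"
        have h1: "z1 - of_real t0 = \<i> * of_real y1"
          using s x by (intro complex_eqI) (simp_all add: t0_def s_def x1_def y1_def x2_def y2_def field_simps)
        have h2: "of_real t0 - z2 = - (\<i> * of_real y2)"
          using s x by (intro complex_eqI) (simp_all add: t0_def s_def x1_def y1_def x2_def y2_def field_simps)
        have "cmod (z1 - of_real t0) = y1" using y1 by (simp add: h1 norm_mult)
        moreover have "cmod (of_real t0 - z2) = y2" using y2 by (simp only: h2 norm_minus_cancel norm_mult) simp
        ultimately show ?thesis
          using apos bpos y1 y2 p1 unfolding f_def by (auto intro!: add_mono powr_mono2)
      next
        assume y: "y1 = y2"
        have ah: "\<alpha> = 1/2" using y y1 by (simp add: \<alpha>_def s_def)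
        have ft0: "f t0 = 2 * (D/2) powr p" unfolding f_def a0 b0 ah by simp
        show ?thesis
        proof
          fix t
          define a where "a = cmod (z1 - of_real t)"
          define b where "b = cmod (of_real t - z2)"
          have a: "a > 0" using apos[of t] y1 unfolding a_def by linarith
          have b: "b > 0" using bpos[of t] y2 unfolding b_def by linarith
          have cv: "((1 - 1/2) *\<^sub>R a + (1/2) *\<^sub>R b) powr p \<le> (1 - 1/2) * a powr p + (1/2) * b powr p"
            by (rule convex_onD[OF powr_convex]) (use p1 a b in auto)
          have "(D/2) powr p \<le> ((a + b)/2) powr p"
            using tri[of t] Dpos p1 by (intro powr_mono2) (auto simp: a_def b_def)
          also have "\<dots> \<le> (a powr p + b powr p) / 2" using cv by (simp add: field_simps)
          finally show "f t0 \<le> f t" unfolding ft0 by (simp add: f_def a_def b_def)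
        qed
      qed
    next
      assume min: "\<forall>t. f t0 \<le> f t"
      show "x1 = x2 \<or> y1 = y2"
      proof (rule ccontr)
        assume nx: "\<not> (x1 = x2 \<or> y1 = y2)"
        define A1 where "A1 t = (x1 - t)^2 + y1^2" for t
        define A2 where "A2 t = (x2 - t)^2 + y2^2" for t
        have c1: "cmod (z1 - of_real t) = sqrt (A1 t)" for t
          by (simp add: cmod_def A1_def x1_def y1_def)
        have c2: "cmod (of_real t - z2) = sqrt (A2 t)" for t
          by (simp add: cmod_def A2_def x2_def y2_def power2_commute)
        have A1pos: "A1 t > 0" for t using y1 by (simp add: A1_def add_nonneg_pos)
        have A2pos: "A2 t > 0" for t using y2 by (simp add: A2_def add_nonneg_pos)
        have sq: "sqrt x powr p = x powr (p/2)" if "x > 0" for x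
          using that by (simp add: powr_half_sqrt[symmetric] powr_powr)
        have fA: "f = (\<lambda>t. A1 t powr (p/2) + A2 t powr (p/2))"
          by (simp add: fun_eq_iff f_def c1 c2 sq A1pos A2pos)
        define L where "L = A1 t0 powr (p/2) * (2 * (t0 - x1) * (p/2) / A1 t0)
           + A2 t0 powr (p/2) * (2 * (t0 - x2) * (p/2) / A2 t0)"
        have "(f has_real_derivative L) (at t0)"
          unfolding fA L_def A1_def A2_def using y1 y2 by (intro DERIV_add der)
        then have L0: "L = 0" by (rule DERIV_local_min[of f L t0 1]) (use min in auto)
        define a where "a = cmod (z1 - of_real t0)"
        define b where "b = cmod (of_real t0 - z2)"
        define w where "w = x2 - x1"
        have ap: "a > 0" using a0 al Dpos by (simp add: a_def)
        have bp: "b > 0" using b0 al Dpos by (simp add: b_def)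
        have A1a: "A1 t0 = a^2" using c1[of t0] A1pos[of t0] by (simp add: a_def less_imp_le)
        have A2a: "A2 t0 = b^2" using c2[of t0] A2pos[of t0] by (simp add: b_def less_imp_le)
        have A1p: "A1 t0 powr (p/2) = a powr p" using c1[of t0] sq A1pos by (simp add: a_def)
        have A2p: "A2 t0 powr (p/2) = b powr p" using c2[of t0] sq A2pos by (simp add: b_def)
        have oma: "1 - \<alpha> = y2 / s" using s by (simp add: \<alpha>_def s_def field_simps)
        have d1: "t0 - x1 = a * w / D"
        proof -
          have "a * w / D = y1 * w / s" using Dpos unfolding a_def a0 \<alpha>_def by simp
          also have "\<dots> = t0 - x1" using s by (simp add: t0_def w_def s_def field_simps)
          finally show ?thesis by simp
        qed
        have d2: "t0 - x2 = - b * w / D"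
        proof -
          have "- b * w / D = - y2 * w / s" using Dpos unfolding b_def b0 oma by simp
          also have "\<dots> = t0 - x2" using s by (simp add: t0_def w_def s_def field_simps)
          finally show ?thesis by simp
        qed
        have "L = p * w / D * (a powr p / a - b powr p / b)"
          unfolding L_def A1p A2p
          unfolding A1a A2a d1 d2 using ap bp Dpos by (simp add: field_simps power2_eq_square)
        moreover have "w \<noteq> 0" using nx by (simp add: w_def)
        ultimately have "a powr p / a = b powr p / b" using L0 p1 Dpos by simp
        moreover have "a powr p / a = a powr (p - 1)" using ap by (simp add: powr_diff)
        moreover have "b powr p / b = b powr (p - 1)" using bp by (simp add: powr_diff)
        ultimately have "a powr (p - 1) = b powr (p - 1)" by simp
        then have "a = b" using powr_base_eq_iff[of a b "p - 1"] ap bp p1 by simp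
        then have "\<alpha> * D = (1 - \<alpha>) * D" using a0 b0 by (simp add: a_def b_def)
        then have "\<alpha> = 1/2" using Dpos by simp
        then have "y1 = y2" using s by (simp add: \<alpha>_def s_def field_simps)
        then show False using nx by simp
      qed
    qed
    show "bHp p z1 z2 = Tp p z1 z2 \<longleftrightarrow> Re z1 = Re z2 \<or> Im z1 = Im z2"
    proof (cases "z1 = z2")
      case True
      then have "c = 0" by (simp add: c_def)
      then have "g p = (\<lambda>_. 0)" by (simp add: g_def fun_eq_iff)
      then have "bHp p z1 z2 = 0" unfolding bH by simp
      moreover have "Tp p z1 z2 = 0" using \<open>c = 0\<close> by (simp add: Tform)
      ultimately show ?thesis using True by simp
    next
      case False
      then have cpos: "c > 0" by (simp add: c_def)
      have key1: "bHp p z1 z2 = Tp p z1 z2 \<longleftrightarrow> (\<forall>t. f t0 \<le> f t)"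
      proof
        assume eq: "bHp p z1 z2 = Tp p z1 z2"
        show "\<forall>t. f t0 \<le> f t"
        proof
          fix t
          have "g p t \<le> g p t0"
            using eq Tg[of p] p1 bdd[of p] cSUP_upper[of t UNIV "g p"] unfolding bH by simp
          then have "f t0 powr (1/p) \<le> f t powr (1/p)"
          proof -
            have u: "f t powr (1/p) > 0" "f t0 powr (1/p) > 0" using fpos[of t] fpos[of t0] by auto
            have "c / f t powr (1/p) \<le> c / f t0 powr (1/p)" using \<open>g p t \<le> g p t0\<close> by (simp add: gf)
            then have "c * f t0 powr (1/p) \<le> c * f t powr (1/p)" using u by (simp add: field_simps)
            then show ?thesis using cpos by simp
          qed
          then show "f t0 \<le> f t" using powr_base_le_iff fpos p1 by (smt (verit) divide_pos_pos)
        qed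
      next
        assume m: "\<forall>t. f t0 \<le> f t"
        have "Sup (range (g p)) = g p t0"
        proof (rule cSup_eq_maximum)
          show "g p t0 \<in> range (g p)" by simp
          show "x \<le> g p t0" if "x \<in> range (g p)" for x
          proof -
            from that obtain t where x: "x = g p t" by auto
            have "f t0 powr (1/p) \<le> f t powr (1/p)"
              using m fpos p1 by (intro powr_mono2) (auto simp: less_imp_le)
            moreover have "f t0 powr (1/p) > 0" using fpos[of t0] by simp
            ultimately show ?thesis unfolding x gf using cpos by (intro frac_le) auto
          qed
        qed
        then show "bHp p z1 z2 = Tp p z1 z2" using Tg[of p] p1 by (simp add: bH)
      qed
      show ?thesis using key1 key2 by (simp add: x1_def x2_def y1_def y2_def)
    qed
  qed
  show ?thesis using P1 P2 sHv T1 P5 bH[of 1] sH_def by (simp add: c_def D_def)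
qed

end
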